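(* Let $\{L_t\}_{t\ge0},\{U_t\}_{t\ge1}$ satisfy the Simplified Recursion with constants $C_1,C_2,C_3>0$, where the step sizes are $\eta_t=\frac{2}{C_1(t+L)}$ for all $t\ge1$, for some integer $L\ge3$. Let $a>0$ and $\delta\in(0,1)$, and assume $\mathbb P(L_0\le a)\ge1-\delta$. Define $$K:=\max\{L-2;32\}\cdot\big(\mathbf 1_{\{L\ge32\}}+32\cdot\mathbf 1_{\{L\le31\}}\big).$$ Then $$\mathbb P\Big(\forall t\ge0:\ L_t\le 31.5\,K\max\Big\{\frac{aL}{\log(\delta^{-1})};\frac{C_2}{C_1^2};\frac{C_3^2}{C_1^2}\Big\}\frac{\log(\delta^{-1})+2\log\log(t+9)}{t+L}\Big)\ge1-2\delta.$$
   Context: Simplified Recursion: on a probability space with filtration $\{\mathcal F_t\}_{t\ge0}$, $\{L_t\}_{t\ge0}$ is a non-negative adapted process, $\{U_t\}_{t\ge1}$ is a real adapted process, $\{\eta_t\}_{t\ge1}$ is a deterministic positive sequence of step sizes, and almost surely for all $t\ge1$: $L_t\le(1-C_1\eta_t)L_{t-1}+U_t$, $\ \big|\mathbb E(U_t\mid\mathcal F_{t-1})\big|\le C_2\eta_t^2$, $\ |U_t|\le C_3\eta_t\sqrt{L_{t-1}}+C_2\eta_t^2$. *)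

theory Defs
  imports "HOL-Probability.Probability" "HOL-Probability.Conditional_Expectation"
begin

end

theory Submission
  imports Defs
begin

lemma maximal_ineq:
  fixes M :: "'a measure" and F :: "nat \<Rightarrow> 'a measure" and Z :: "nat \<Rightarrow> 'a \<Rightarrow> real"
  assumes P: "prob_space M"
   and sub: "\<And>t. subalgebra M (F t)"
   and mono: "\<And>s t. s \<le> t \<Longrightarrow> sets (F s) \<subseteq> sets (F t)"
   and Zm: "\<And>t. Z t \<in> borel_measurable (F t)"
   and Zi: "\<And>t. integrable M (Z t)"
   and Zn: "\<And>t x. x \<in> space M \<Longrightarrow> Z t x \<ge> 0"
   and sup: "\<And>t A. 1 \<le> t \<Longrightarrow> t \<le> T \<Longrightarrow> A \<in> sets (F (t-1)) \<Longrightarrow>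
        (\<integral>x. indicator A x * Z t x \<partial>M) \<le> (\<integral>x. indicator A x * Z (t-1) x \<partial>M)"
   and c: "c > 0"
  shows "measure M {x\<in>space M. \<exists>t\<le>T. c \<le> Z t x} \<le> (\<integral>x. Z 0 x \<partial>M) / c"
proof -
  interpret prob_space M by (rule P)
  have spF: "\<And>t. space (F t) = space M" using sub unfolding subalgebra_def by auto
  have ZmN: "Z t \<in> borel_measurable (F N)" if "t \<le> N" for t N
  proof -
    have "subalgebra (F N) (F t)" unfolding subalgebra_def using spF mono[OF that] by auto
    then show ?thesis using measurable_from_subalg Zm by blast
  qed
  have ZM[measurable]: "Z t \<in> borel_measurable M" for t using measurable_from_subalg[OF sub Zm] .
  define B where "B N = {x\<in>space M. \<forall>t\<le>N. Z t x < c}" for N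
  define f where "f N x = (if x \<in> B N then Z N x else c)" for N x
  have BF: "B N \<in> sets (F N)" for N
  proof -
    have "B N = {x\<in>space (F N). \<forall>t\<le>N. Z t x < c}" using spF B_def by auto
    also have "\<dots> \<in> sets (F N)"
      using ZmN[of _ N] by measurable
    finally show ?thesis .
  qed
  have BM[measurable]: "B N \<in> sets M" for N using BF sub unfolding subalgebra_def by blast
  have fm[measurable]: "f N \<in> borel_measurable M" for N unfolding f_def by measurable
  have fi: "integrable M (f N)" for N
  proof (rule Bochner_Integration.integrable_bound[of _ "\<lambda>x. \<bar>Z N x\<bar> + c"])
    show "integrable M (\<lambda>x. \<bar>Z N x\<bar> + c)" using Zi by auto
    show "AE x in M. norm (f N x) \<le> norm (\<bar>Z N x\<bar> + c)" using c by (auto simp: f_def)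
  qed simp
  have key: "(\<integral>x. f N x \<partial>M) \<le> (\<integral>x. Z 0 x \<partial>M)" if "N \<le> T" for N
    using that
  proof (induction N)
    case 0
    show ?case by (rule integral_mono[OF fi Zi]) (auto simp: f_def B_def)
  next
    case (Suc N)
    have ineq: "f (Suc N) x \<le> f N x + (indicator (B N) x * Z (Suc N) x - indicator (B N) x * Z N x)"
      if "x \<in> space M" for x
      using that by (auto simp: f_def B_def indicator_def le_Suc_eq)
    have i1: "integrable M (\<lambda>x. indicator (B N) x * Z k x)" for k
      using integrable_real_mult_indicator[OF BM Zi] by (simp add: mult.commute)
    have "(\<integral>x. f (Suc N) x \<partial>M) \<le> (\<integral>x. f N x + (indicator (B N) x * Z (Suc N) x - indicator (B N) x * Z N x) \<partial>M)"
      by (rule integral_mono[OF fi]) (use ineq fi i1 in auto)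
    also have "\<dots> = (\<integral>x. f N x \<partial>M) + ((\<integral>x. indicator (B N) x * Z (Suc N) x \<partial>M) - (\<integral>x. indicator (B N) x * Z N x \<partial>M))"
      using fi i1 by simp
    also have "\<dots> \<le> (\<integral>x. f N x \<partial>M)"
      using sup[of "Suc N" "B N"] Suc.prems BF by simp
    also have "\<dots> \<le> (\<integral>x. Z 0 x \<partial>M)" using Suc by simp
    finally show ?case .
  qed
  let ?E = "{x\<in>space M. \<exists>t\<le>T. c \<le> Z t x}"
  have Em[measurable]: "?E \<in> sets M" by measurable
  have "c * measure M ?E = (\<integral>x. c * indicator ?E x \<partial>M)"
    using Em by (simp add: Int_absorb2 sets.sets_into_space)
  also have "\<dots> \<le> (\<integral>x. f T x \<partial>M)"
    by (rule integral_mono[OF _ fi]) (use integrable_real_mult_indicator[OF Em, of "\<lambda>_. c"] in \<open>simp add: mult.commute\<close>, auto simp: f_def B_def indicator_def Zn c less_imp_le not_less)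
  also have "\<dots> \<le> (\<integral>x. Z 0 x \<partial>M)" using key by simp
  finally show ?thesis using c by (simp add: field_simps)
qed

lemma exp_le_quad:
  fixes x :: real assumes "x \<le> 1" shows "exp x \<le> 1 + x + x\<^sup>2"
proof (cases "x \<ge> 0")
  case True then show ?thesis using exp_bound assms by blast
next
  case False
  have pos: "1 - x > 0" using False by simp
  have "exp x = 1 / exp (-x)" by (simp add: exp_minus field_simps)
  also have "\<dots> \<le> 1 / (1 - x)"
    using pos exp_ge_add_one_self[of "-x"] by (intro divide_left_mono) auto
  also have "\<dots> \<le> 1 + x + x\<^sup>2"
  proof -
    have e: "(1 - x) * (1 + x + x\<^sup>2) = 1 - x^3" by (simp add: algebra_simps power2_eq_square power3_eq_cube)
    have "x^3 < 0" using False by (simp add: power_less_zero_eq)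
    then have "1 \<le> (1 - x) * (1 + x + x\<^sup>2)" unfolding e by simp
    then show ?thesis using pos by (simp add: field_simps)
  qed
  finally show ?thesis .
qed

lemma det_step:
  fixes n c d B h L0 L1 u :: real
  assumes "3 \<le> n" "0 \<le> d" "B \<ge> c\<^sup>2 + 2*d" "0 \<le> h" "0 \<le> L0" "L0 \<le> B + h/(n-1)"
    "L1 \<le> (1 - 2/n)*L0 + u" "\<bar>u\<bar> \<le> 2*c* sqrt L0/n + 4*d/n\<^sup>2"
  shows "L1 \<le> B + h/n"
proof -
  have amgm: "2*c* sqrt L0 \<le> L0 + c\<^sup>2"
    using assms(5) sum_squares_bound[of c "sqrt L0"] by (simp add: algebra_simps)
  have n0: "n > 0" using assms by simp
  have "2*c* sqrt L0/n \<le> (L0 + c\<^sup>2)/n" using amgm n0 by (intro divide_right_mono) auto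
  then have "L1 \<le> (1-2/n)*L0 + (L0 + c\<^sup>2)/n + 4*d/n\<^sup>2"
    using assms(7,8) by linarith
  also have "\<dots> = (1-1/n)*L0 + c\<^sup>2/n + 4*d/n\<^sup>2" by (simp add: add_divide_distrib diff_divide_distrib algebra_simps)
  also have "\<dots> \<le> (1-1/n)*(B + h/(n-1)) + c\<^sup>2/n + 4*d/n\<^sup>2"
    using assms n0 by (intro add_right_mono mult_left_mono) auto
  also have "\<dots> = B + h/n - (B - c\<^sup>2 - 4*d/n)/n"
    using assms by (simp add: field_simps power2_eq_square)
  also have "\<dots> \<le> B + h/n"
  proof -
    have "4*d/n \<le> 4*d/3" using assms by (intro divide_left_mono) auto
    then have "4*d/n \<le> 2*d" using assms by linarith
    then have "B - c\<^sup>2 - 4*d/n \<ge> 0" using assms by simp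
    then show ?thesis using n0 by simp
  qed
  finally show ?thesis .
qed

lemma sqrt_step: fixes n :: real assumes "n \<ge> 3"
  shows "(n-1)* sqrt(n-1) \<ge> n* sqrt n - 3/2* sqrt n"
proof -
  have "(n* sqrt n - 3/2* sqrt n)\<^sup>2 = n*(n-3/2)\<^sup>2" using assms by (simp add: power2_eq_square algebra_simps)
  also have "\<dots> \<le> (n-1)^3" using assms by (simp add: power2_eq_square power3_eq_cube algebra_simps)
  also have "\<dots> = ((n-1)* sqrt(n-1))\<^sup>2" using assms by (simp add: power2_eq_square power3_eq_cube algebra_simps)
  finally have "(n* sqrt n - 3/2* sqrt n)\<^sup>2 \<le> ((n-1)* sqrt(n-1))\<^sup>2" .
  moreover have "0 \<le> (n-1)* sqrt(n-1)" using assms by simp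
  ultimately show ?thesis by (rule power2_le_imp_le)
qed

lemma S1:
  fixes n N Mx c :: real
  assumes "3 \<le> n" "n \<le> N" "0 < Mx" "c\<^sup>2 \<le> Mx"
  shows "(n* sqrt n/(16*Mx* sqrt N))*(1-2/n) + 8*(n* sqrt n/(16*Mx* sqrt N))\<^sup>2*c\<^sup>2/n\<^sup>2
          \<le> (n-1)* sqrt(n-1)/(16*Mx* sqrt N)"
proof -
  define \<beta> where "\<beta> = 1/(16*Mx* sqrt N)"
  have b0: "\<beta> > 0" using assms by (simp add: \<beta>_def)
  have s: "sqrt n \<le> sqrt N" using assms by simp
  have sn: "sqrt n > 0" using assms by simp
  have "16*\<beta>*c\<^sup>2* sqrt n \<le> 1"
  proof -
    have "16*\<beta>*c\<^sup>2* sqrt n = (c\<^sup>2/Mx)*(sqrt n/sqrt N)" using assms by (simp add: \<beta>_def field_simps)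
    also have "\<dots> \<le> 1*1" using assms s sn by (intro mult_mono) (auto simp: field_simps)
    finally show ?thesis by simp
  qed
  then have "(16*\<beta>*c\<^sup>2* sqrt n) * (\<beta>* sqrt n/2) \<le> 1 * (\<beta>* sqrt n/2)"
    using b0 sn by (intro mult_right_mono) auto
  moreover have "8*\<beta>\<^sup>2*c\<^sup>2*(sqrt n * sqrt n) = (16*\<beta>*c\<^sup>2* sqrt n) * (\<beta>* sqrt n/2)"
    by (simp add: power2_eq_square field_simps)
  moreover have "sqrt n * sqrt n = n" using assms by simp
  ultimately have v: "8*\<beta>\<^sup>2*c\<^sup>2*n \<le> \<beta>* sqrt n/2"
    by (metis mult_1)
  have lhs: "(n* sqrt n/(16*Mx* sqrt N))*(1-2/n) + 8*(n* sqrt n/(16*Mx* sqrt N))\<^sup>2*c\<^sup>2/n\<^sup>2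
      = \<beta>*(n* sqrt n - 2* sqrt n) + 8*\<beta>\<^sup>2*c\<^sup>2*n"
    using assms sn by (simp add: \<beta>_def field_simps power2_eq_square)
  have "\<beta>*(n* sqrt n - 2* sqrt n) + 8*\<beta>\<^sup>2*c\<^sup>2*n \<le> \<beta>*(n* sqrt n - 3/2* sqrt n)"
    using v by (simp add: algebra_simps)
  also have "\<dots> \<le> \<beta>*((n-1)* sqrt(n-1))" using sqrt_step[OF assms(1)] b0 by simp
  finally show ?thesis using lhs by (simp add: \<beta>_def)
qed

lemma S2:
  fixes n N Mx d Lc :: real
  assumes "3 \<le> n" "n \<le> N" "0 < Mx" "0 \<le> d" "d \<le> Mx"
  shows "(n * sqrt n/(16*Mx* sqrt N))*(4*d/n\<^sup>2) + (n * sqrt n/(16*Mx* sqrt N))\<^sup>2*(32*d\<^sup>2/n^4)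
     \<le> 3/4*(sqrt n - sqrt Lc)/ sqrt N - 3/4*(sqrt (n-1) - sqrt Lc)/ sqrt N"
proof -
  have sn: "sqrt n > 0" and sN: "sqrt N > 0" using assms by auto
  have n1: "sqrt n \<ge> 1" "sqrt N \<ge> 1" using assms by auto
  have t1: "(n * sqrt n/(16*Mx* sqrt N))*(4*d/n\<^sup>2) = (d/Mx)/(4* sqrt N * sqrt n)"
  proof -
    have "n = sqrt n * sqrt n" using assms by simp
    then have "(n * sqrt n/(16*Mx* sqrt N))*(4*d/n\<^sup>2) = (sqrt n * sqrt n * sqrt n/(16*Mx* sqrt N))*(4*d/(sqrt n * sqrt n)\<^sup>2)"
      by metis
    also have "\<dots> = (d/Mx)/(4* sqrt N * sqrt n)" using sn sN assms by (simp add: field_simps power2_eq_square)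
    finally show ?thesis .
  qed
  have t1b: "(d/Mx)/(4* sqrt N * sqrt n) \<le> 1/(4* sqrt N * sqrt n)"
    using assms sn sN by (intro divide_right_mono) (auto simp: field_simps)
  have t2: "(n * sqrt n/(16*Mx* sqrt N))\<^sup>2*(32*d\<^sup>2/n^4) = (d/Mx)\<^sup>2/(8*N*n)"
  proof -
    have a: "(n * sqrt n)\<^sup>2 = n^3" using assms by (simp add: power2_eq_square power3_eq_cube power_mult_distrib)
    have b: "(sqrt N)\<^sup>2 = N" using assms by simp
    have "(n * sqrt n/(16*Mx* sqrt N))\<^sup>2 = n^3/(256*Mx\<^sup>2*N)"
      unfolding power_divide a using b by (simp add: power_mult_distrib)
    moreover have "n^3/(256*Mx\<^sup>2*N)*(32*d\<^sup>2/n^4) = (d/Mx)\<^sup>2/(8*N*n)"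
      using assms by (simp add: field_simps power2_eq_square power3_eq_cube eval_nat_numeral)
    ultimately show ?thesis by simp
  qed
  have t2b: "(d/Mx)\<^sup>2/(8*N*n) \<le> 1/(8* sqrt N * sqrt n)"
  proof -
    have "(d/Mx)\<^sup>2 \<le> 1" using assms by (simp add: power_le_one)
    moreover have "sqrt N * sqrt n \<le> N * n"
    proof -
      have "sqrt N * 1 \<le> sqrt N * sqrt N" by (rule mult_left_mono) (use n1 in auto)
      then have "sqrt N \<le> N" using assms by simp
      moreover have "sqrt n * 1 \<le> sqrt n * sqrt n" by (rule mult_left_mono) (use n1 in auto)
      then have "sqrt n \<le> n" using assms by simp
      ultimately show ?thesis using assms by (intro mult_mono) auto
    qed
    ultimately show ?thesis using sn sN assms
      by (intro frac_le) (auto intro: mult_pos_pos)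
  qed
  have diff: "sqrt n - sqrt (n-1) \<ge> 1/(2* sqrt n)"
  proof -
    have "(sqrt n - sqrt (n-1)) * (sqrt n + sqrt (n-1)) = 1" using assms by (simp add: algebra_simps)
    moreover have "sqrt n + sqrt (n-1) \<le> 2 * sqrt n" using assms by simp
    moreover have "sqrt (n-1) > 0" using assms by simp
    ultimately show ?thesis using sn
      by (smt (verit, best) divide_le_eq mult_left_mono)
  qed
  have "3/4*(sqrt n - sqrt Lc)/ sqrt N - 3/4*(sqrt (n-1) - sqrt Lc)/ sqrt N = 3/4*(sqrt n - sqrt (n-1))/ sqrt N"
    using sN by (simp add: field_simps)
  also have "\<dots> \<ge> 3/4*(1/(2* sqrt n))/ sqrt N"
    using diff sN by (intro divide_right_mono mult_left_mono) auto
  finally have r: "3/4*(sqrt n - sqrt Lc)/ sqrt N - 3/4*(sqrt (n-1) - sqrt Lc)/ sqrt N \<ge> 3/4*(1/(2* sqrt n))/ sqrt N" .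
  have "3/4*(1/(2* sqrt n))/ sqrt N = 1/(4* sqrt N * sqrt n) + 1/(8* sqrt N * sqrt n)"
    using sn sN by (simp add: field_simps)
  then show ?thesis using t1 t1b t2 t2b r by linarith
qed

lemma S3:
  fixes n N Mx c d h l L :: real
  assumes "3 \<le> n" "n \<le> N" "0 < Mx" "c\<^sup>2 \<le> Mx" "0 \<le> d" "d \<le> Mx" "0 \<le> h" "h \<le> Mx*l"
    "l \<le> N" "0 \<le> L" "L \<le> (c\<^sup>2 + 2*d) + h/(n-1)"
  shows "(n * sqrt n/(16*Mx* sqrt N))\<^sup>2*(8*c\<^sup>2*L/n\<^sup>2 + 32*d\<^sup>2/n^4) \<le> 1"
proof -
  have a: "(n * sqrt n)\<^sup>2 = n^3" using assms by (simp add: power2_eq_square power3_eq_cube power_mult_distrib)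
  have b: "(sqrt N)\<^sup>2 = N" using assms by simp
  have e: "(n * sqrt n/(16*Mx* sqrt N))\<^sup>2 = n^3/(256*Mx\<^sup>2*N)"
    unfolding power_divide a using b by (simp add: power_mult_distrib)
  have f: "n^3/(256*Mx\<^sup>2*N)*(8*c\<^sup>2*L/n\<^sup>2 + 32*d\<^sup>2/n^4) = (8*c\<^sup>2*n*L + 32*d\<^sup>2/n)/(256*Mx\<^sup>2*N)"
    using assms by (simp add: field_simps power2_eq_square power3_eq_cube eval_nat_numeral)
  have hl: "h/(n-1) \<le> Mx*l/(n-1)" using assms by (intro divide_right_mono) auto
  have "L \<le> 3*Mx + Mx*l/(n-1)" using assms hl by linarith
  have nl: "n*(l/(n-1)) \<le> 3/2*N"
  proof -
    have "n/(n-1) \<le> 3/2" using assms by (simp add: field_simps)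
    have "l \<ge> 0" using assms by (smt (verit) mult_nonneg_nonneg zero_le_mult_iff)
    then have "n*(l/(n-1)) = (n/(n-1))*l" by simp
    also have "\<dots> \<le> 3/2 * N" using \<open>n/(n-1) \<le> 3/2\<close> \<open>l \<ge> 0\<close> assms
      by (intro mult_mono) auto
    finally show ?thesis .
  qed
  have "8*c\<^sup>2*n*L \<le> 8*Mx*n*(3*Mx + Mx*l/(n-1))"
    using assms \<open>L \<le> 3*Mx + Mx*l/(n-1)\<close> by (intro mult_mono) auto
  also have "\<dots> = 8*Mx\<^sup>2*(3*n + n*(l/(n-1)))" by (simp add: algebra_simps power2_eq_square)
  also have "\<dots> \<le> 8*Mx\<^sup>2*(3*N + 3/2*N)" using nl assms by (intro mult_left_mono) auto
  finally have g1: "8*c\<^sup>2*n*L \<le> 36*Mx\<^sup>2*N" by simp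
  have "d\<^sup>2 \<le> Mx\<^sup>2" using assms by (intro power_mono) auto
  then have "32*d\<^sup>2/n \<le> 32*Mx\<^sup>2/3" using assms by (intro frac_le) auto
  also have "\<dots> \<le> 11*Mx\<^sup>2*N" using assms by (simp add: power2_eq_square mult_le_cancel_left1)
  finally have g2: "32*d\<^sup>2/n \<le> 11*Mx\<^sup>2*N" .
  have "0 \<le> Mx\<^sup>2*N" using assms by simp
  then have "8*c\<^sup>2*n*L + 32*d\<^sup>2/n \<le> 256*Mx\<^sup>2*N" using g1 g2 by linarith
  then have "(8*c\<^sup>2*n*L + 32*d\<^sup>2/n)/(256*Mx\<^sup>2*N) \<le> 1" using assms by simp
  then show ?thesis unfolding e f .
qed

lemma ln2_ge: "ln (2::real) \<ge> 1/2"
proof -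
  have "exp (1/2::real) * exp (1/2) = exp 1" by (simp flip: exp_add)
  also have "\<dots> \<le> 2 * 2" using exp_le by simp
  finally have "(exp (1/2::real))\<^sup>2 \<le> 2\<^sup>2" by (simp add: power2_eq_square)
  then have "exp (1/2::real) \<le> 2" by (rule power2_le_imp_le) auto
  then have "ln (exp (1/2::real)) \<le> ln 2" by (subst ln_le_cancel_iff) auto
  then show ?thesis by simp
qed

lemma lnln_ge: fixes t :: real assumes "t \<ge> 0" shows "ln (ln (t+9)) \<ge> ln 2"
proof -
  have "exp (2::real) = exp 1 * exp 1" by (simp flip: exp_add)
  also have "\<dots> \<le> 3 * 3" using exp_le by (intro mult_mono) auto
  finally have "exp 2 \<le> t + 9" using assms by simp
  then have "2 \<le> ln (t+9)" using assms by (simp add: ln_ge_iff)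
  then show ?thesis by simp
qed

lemma epoch_num:
  fixes t l :: real and j :: nat
  assumes "t \<ge> 0" and l0: "l \<ge> 0" and "t + 9 \<ge> 2^(j+1)"
  shows "34*l + 32*ln ((real j+1)*(real j+2)) + 24 \<le> 1008*l + 2016*ln (ln (t+9))"
proof -
  have l2: "ln (2::real) \<ge> 1/2" by (rule ln2_ge)
  have a1: "ln (t+9) \<ge> ln (2^(j+1))" using assms by simp
  have a2: "ln ((2::real)^(j+1)) = (real j+1) * ln 2" by (subst ln_realpow) auto
  have a3: "(real j+1) * ln 2 \<ge> (real j+1) * (1/2)" using l2 by (intro mult_left_mono) auto
  have a: "ln (t+9) \<ge> (real j+1)/2" using a1 a2 a3 by linarith
  have b: "ln (ln (t+9)) \<ge> ln (real j+1) - ln 2"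
  proof -
    have "ln ((real j+1)/2) \<le> ln (ln (t+9))" using a by simp
    then show ?thesis by (simp add: ln_div)
  qed
  have c: "ln ((real j+1)*(real j+2)) \<le> 2*ln (real j+1) + ln 2"
  proof -
    have "ln ((real j+1)*(real j+2)) = ln (real j+1) + ln (real j+2)" by (rule ln_mult_pos) auto
    also have "ln (real j+2) \<le> ln (2*(real j+1))" by simp
    also have "\<dots> = ln 2 + ln (real j+1)" by (rule ln_mult_pos) auto
    finally show ?thesis by simp
  qed
  have d: "ln (ln (t+9)) \<ge> ln 2" using lnln_ge assms by simp
  have gen: "\<And>X Y Z P (l::real). X - P \<le> Z \<Longrightarrow> Y \<le> 2*X + P \<Longrightarrow> P \<le> Z \<Longrightarrow> 1/2 \<le> P \<Longrightarrow> 0 \<le> l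
     \<Longrightarrow> 34*l + 32*Y + 24 \<le> 1008*l + 2016*Z" by linarith
  show ?thesis by (rule gen[OF b c d l2 l0])
qed

lemma two_pow_bracket:
  fixes y :: real assumes "y > 1" shows "\<exists>j::nat. 2^j < y \<and> y \<le> 2^(j+1)"
proof -
  obtain k :: nat where k: "y < 2^k" using real_arch_pow[of 2 y] by auto
  define k0 where "k0 = (LEAST k::nat. y \<le> 2^k)"
  have k0: "y \<le> 2^k0" unfolding k0_def by (rule LeastI[of _ k]) (use k in simp)
  have "k0 \<noteq> 0"
  proof
    assume "k0 = 0" then show False using k0 assms by simp
  qed
  then obtain j where j: "k0 = Suc j" by (cases k0) auto
  have "\<not> y \<le> 2^j" using not_less_Least[of j "\<lambda>k. y \<le> 2^k"] j unfolding k0_def by auto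
  then show ?thesis using k0 j by (intro exI[of _ j]) auto
qed

theorem theorem2:
  fixes M :: "'a measure" and F :: "nat \<Rightarrow> 'a measure"
    and L :: "nat \<Rightarrow> 'a \<Rightarrow> real" and U :: "nat \<Rightarrow> 'a \<Rightarrow> real"
    and \<eta> :: "nat \<Rightarrow> real"
    and C\<^sub>1 C\<^sub>2 C\<^sub>3 a \<delta> :: real and Lc :: nat
  assumes prob: "prob_space M"
    and filt_sub: "\<And>t. subalgebra M (F t)"
    and filt_mono: "\<And>s t. s \<le> t \<Longrightarrow> sets (F s) \<subseteq> sets (F t)"
    and L_adapted: "\<And>t. L t \<in> borel_measurable (F t)"
    and L_nonneg: "\<And>t x. x \<in> space M \<Longrightarrow> L t x \<ge> 0"
    and U_adapted: "\<And>t. t \<ge> 1 \<Longrightarrow> U t \<in> borel_measurable (F t)"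
    and U_int: "\<And>t. t \<ge> 1 \<Longrightarrow> integrable M (U t)"
    and C_pos: "C\<^sub>1 > 0" "C\<^sub>2 > 0" "C\<^sub>3 > 0"
    and Lc: "Lc \<ge> 3"
    and eta_def: "\<And>t. t \<ge> 1 \<Longrightarrow> \<eta> t = 2 / (C\<^sub>1 * (real t + real Lc))"
    and recursion: "AE x in M. \<forall>t\<ge>1. L t x \<le> (1 - C\<^sub>1 * \<eta> t) * L (t - 1) x + U t x"
    and U_bound: "AE x in M. \<forall>t\<ge>1. \<bar>U t x\<bar> \<le> C\<^sub>3 * \<eta> t * sqrt (L (t - 1) x) + C\<^sub>2 * (\<eta> t)\<^sup>2"
    and cond_exp_bound: "\<And>t. t \<ge> 1 \<Longrightarrow>
          AE x in M. \<bar>real_cond_exp M (F (t - 1)) (U t) x\<bar> \<le> C\<^sub>2 * (\<eta> t)\<^sup>2"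
    and a_pos: "a > 0"
    and \<delta>: "0 < \<delta>" "\<delta> < 1"
    and init: "measure M {x \<in> space M. L 0 x \<le> a} \<ge> 1 - \<delta>"
  shows "measure M {x \<in> space M. \<forall>t. L t x \<le>
            31.5 * (max (real Lc - 2) 32 * ((if Lc \<ge> 32 then 1 else 0) + 32 * (if Lc \<le> 31 then 1 else 0)))
              * max (max (a * real Lc / ln (1 / \<delta>)) (C\<^sub>2 / C\<^sub>1\<^sup>2)) (C\<^sub>3\<^sup>2 / C\<^sub>1\<^sup>2)
              * (ln (1 / \<delta>) + 2 * ln (ln (real t + 9))) / (real t + real Lc)}
         \<ge> 1 - 2 * \<delta>"
  proof -
  interpret P: prob_space M by (rule prob)
  define l where "l = ln (1/\<delta>)"
  have l0: "l > 0" using \<delta> by (simp add: l_def ln_div)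
  define c where "c = C\<^sub>3 / C\<^sub>1"
  define d where "d = C\<^sub>2 / C\<^sub>1\<^sup>2"
  define Mx where "Mx = max (max (a * real Lc / ln (1 / \<delta>)) (C\<^sub>2 / C\<^sub>1\<^sup>2)) (C\<^sub>3\<^sup>2 / C\<^sub>1\<^sup>2)"
  have c0: "c > 0" using C_pos by (simp add: c_def)
  have d0: "d > 0" using C_pos by (simp add: d_def)
  have cc: "C\<^sub>3\<^sup>2 / C\<^sub>1\<^sup>2 = c\<^sup>2" by (simp add: c_def power_divide)
  have Mxc: "c\<^sup>2 \<le> Mx" unfolding Mx_def cc by simp
  have Mxd: "d \<le> Mx" unfolding Mx_def d_def by simp
  have Mx0: "Mx > 0" using d0 Mxd by simp
  have Mxa: "a * real Lc \<le> Mx * l"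
  proof -
    have "a * real Lc / l \<le> Mx" unfolding Mx_def l_def by simp
    then show ?thesis using l0 by (simp add: field_simps)
  qed
  define nn where "nn t = real t + real Lc" for t :: nat
  have nn3: "nn t \<ge> 3" for t using Lc by (simp add: nn_def)
  have nnS: "nn (Suc t) - 1 = nn t" for t by (simp add: nn_def)
  have nnpos: "real t + real Lc \<noteq> 0" for t using Lc by simp
  have nnz: "nn t \<noteq> 0" for t using nn3[of t] by simp
  have etan: "\<eta> t = 2 / (C\<^sub>1 * nn t)" if "t \<ge> 1" for t using eta_def[OF that] by (simp add: nn_def)
  have C1z: "C\<^sub>1 \<noteq> 0" using C_pos by simp
  have eta1: "C\<^sub>1 * \<eta> t = 2 / nn t" if "t \<ge> 1" for t
    using etan[OF that] C1z nnz[of t] by (simp add: field_simps)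
  have eta3: "C\<^sub>3 * \<eta> t = 2 * c / nn t" if "t \<ge> 1" for t
    using etan[OF that] C1z nnz[of t] by (simp add: c_def field_simps)
  have eta2: "C\<^sub>2 * (\<eta> t)\<^sup>2 = 4 * d / (nn t)\<^sup>2" if "t \<ge> 1" for t
  proof -
    have "C\<^sub>2 * (\<eta> t)\<^sup>2 = (C\<^sub>2 / C\<^sub>1\<^sup>2) * (C\<^sub>1 * \<eta> t)\<^sup>2" using C1z by (simp add: power_mult_distrib)
    also have "\<dots> = d * (2 / nn t)\<^sup>2" using eta1[OF that] by (simp add: d_def)
    also have "\<dots> = 4 * d / (nn t)\<^sup>2" by (simp add: power_divide)
    finally show ?thesis .
  qed
  have rec: "AE x in M. \<forall>t\<ge>1. L t x \<le> (1 - 2 / nn t) * L (t-1) x + U t x"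
    using recursion by eventually_elim (simp add: eta1)
  have ub: "AE x in M. \<forall>t\<ge>1. \<bar>U t x\<bar> \<le> 2 * c * sqrt (L (t-1) x) / nn t + 4 * d / (nn t)\<^sup>2"
    using U_bound by eventually_elim (simp add: eta3 eta2)
  have ce: "AE x in M. \<bar>real_cond_exp M (F (t-1)) (U t) x\<bar> \<le> 4 * d / (nn t)\<^sup>2" if "t \<ge> 1" for t
    using cond_exp_bound[OF that] eta2[OF that] by simp
  define B where "B = c\<^sup>2 + 2*d"
  define G where "G t = B + a * real Lc / nn t" for t
  have B0: "B \<ge> 0" using d0 by (simp add: B_def)
  have Gbd: "AE x in M. L 0 x \<le> a \<longrightarrow> (\<forall>t. L t x \<le> G t)"
    using rec ub AE_space
  proof eventually_elim
    case (elim x)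
    show ?case
    proof (intro impI allI)
      fix t assume a0: "L 0 x \<le> a"
      show "L t x \<le> G t"
      proof (induction t)
        case 0
        have "G 0 = B + a" using Lc by (simp add: G_def nn_def)
        then show ?case using a0 B0 by simp
      next
        case (Suc t)
        have r: "L (Suc t) x \<le> (1 - 2 / nn (Suc t)) * L t x + U (Suc t) x"
          using elim(1) by auto
        have u: "\<bar>U (Suc t) x\<bar> \<le> 2 * c * sqrt (L t x) / nn (Suc t) + 4 * d / (nn (Suc t))\<^sup>2"
          using elim(2) by auto
        have h: "L t x \<le> B + a * real Lc / (nn (Suc t) - 1)" using Suc.IH nnS by (simp add: G_def)
        have "L (Suc t) x \<le> B + a * real Lc / nn (Suc t)"
          by (rule det_step[OF nn3 less_imp_le[OF d0] _ _ L_nonneg[OF elim(3)] h r u])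
             (use a_pos B_def in auto)
        then show ?case by (simp add: G_def)
      qed
    qed
  qed

  have Lnn: "L t x \<ge> 0" if "x \<in> space M" for t x using L_nonneg[OF that] .
  have spF: "space (F t) = space M" for t using filt_sub[of t] unfolding subalgebra_def by auto
  have LM[measurable]: "L t \<in> borel_measurable M" for t using measurable_from_subalg[OF filt_sub L_adapted] .
  have UM[measurable]: "U t \<in> borel_measurable M" if "t \<ge> 1" for t using measurable_from_subalg[OF filt_sub U_adapted[OF that]] .
  have sfs: "sigma_finite_subalgebra M (F t)" for t
  proof (rule finite_measure_subalgebra_is_sigma_finite)
    show "finite_measure_subalgebra M (F t)"
      unfolding finite_measure_subalgebra_def finite_measure_subalgebra_axioms_def
      using P.finite_measure_axioms filt_sub by auto
  qed
  define S0 where "S0 = {x\<in>space M. L 0 x \<le> a}"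
  have S0F: "S0 \<in> sets (F t)" for t
  proof -
    have "{x\<in>space (F 0). L 0 x \<le> a} \<in> sets (F 0)" using L_adapted[of 0] by measurable
    then have "S0 \<in> sets (F 0)" unfolding S0_def spF .
    then show ?thesis using filt_mono[of 0 t] by auto
  qed
  have S0M[measurable]: "S0 \<in> sets M" using S0F[of 0] filt_sub[of 0] unfolding subalgebra_def by auto
  define I where "I x = (indicator S0 x :: real)" for x
  have IF: "I \<in> borel_measurable (F t)" for t unfolding I_def using S0F[of t] by simp
  have IM[measurable]: "I \<in> borel_measurable M" unfolding I_def by simp
  define \<theta> where "\<theta> N t = nn t * sqrt (nn t) / (16 * Mx * sqrt N)" for N :: real and t
  define D where "D N t = 3/4 * (sqrt (nn t) - sqrt (real Lc)) / sqrt N" for N :: real and t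
  define Z where "Z N t x = I x * exp (\<theta> N t * L t x - D N t)" for N t x
  define T where "T N = nat \<lfloor>N\<rfloor> - Lc" for N :: real
  have th0: "\<theta> N t \<ge> 0" if "N \<ge> 0" for N t using nn3[of t] Mx0 that by (simp add: \<theta>_def)
  have D0: "D N t \<ge> 0" if "N \<ge> 0" for N t using that by (simp add: D_def nn_def)
  have good: "AE x in M. x \<in> space M \<and> (\<forall>t\<ge>1. L t x \<le> (1 - 2 / nn t) * L (t-1) x + U t x)
     \<and> (\<forall>t\<ge>1. \<bar>U t x\<bar> \<le> 2 * c * sqrt (L (t-1) x) / nn t + 4 * d / (nn t)\<^sup>2)
     \<and> (L 0 x \<le> a \<longrightarrow> (\<forall>t. L t x \<le> G t))"
    using AE_space rec ub Gbd by eventually_elim auto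
  have Zbd: "AE x in M. norm (Z N t x) \<le> exp (\<theta> N t * G t)" if "N \<ge> 0" for N t
    using good
  proof eventually_elim
    case (elim x)
    show ?case
    proof (cases "x \<in> S0")
      case True
      then have "L t x \<le> G t" using elim by (auto simp: S0_def)
      then have "\<theta> N t * L t x - D N t \<le> \<theta> N t * G t"
        using th0[OF that] D0[OF that] by (smt (verit) mult_left_mono)
      then show ?thesis using True by (simp add: Z_def I_def)
    next
      case False then show ?thesis by (simp add: Z_def I_def)
    qed
  qed
  have ZF: "Z N t \<in> borel_measurable (F t)" for N t
  proof -
    have [measurable]: "L t \<in> borel_measurable (F t)" "I \<in> borel_measurable (F t)" using L_adapted IF by auto
    show ?thesis unfolding Z_def by measurable
  qed
  have ZMm[measurable]: "Z N t \<in> borel_measurable M" for N t using measurable_from_subalg[OF filt_sub ZF] .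
  have Zi: "integrable M (Z N t)" if "N \<ge> 0" for N t
    by (rule P.integrable_const_bound[OF Zbd[OF that]]) simp
  have Zn: "Z N t x \<ge> 0" for N t x by (simp add: Z_def I_def)
  have step: "(\<integral>x. indicator A x * Z N t x \<partial>M) \<le> (\<integral>x. indicator A x * Z N (t-1) x \<partial>M)"
    if N1: "N \<ge> real Lc" and N2: "N \<ge> l" and t1: "1 \<le> t" and tN: "nn t \<le> N" and A: "A \<in> sets (F (t-1))"
    for N t A

  proof -
    obtain s where ts: "t = Suc s" using t1 by (cases t) auto
    have N0: "N \<ge> 0" using N1 by simp
    define nt where "nt = nn t"
    define th where "th = \<theta> N t"
    have nt3: "nt \<ge> 3" using nn3 by (simp add: nt_def)
    have ntN: "nt \<le> N" using tN by (simp add: nt_def)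
    have nts: "nn s = nt - 1" using nnS[of s] ts by (simp add: nt_def)
    have th0': "th \<ge> 0" using th0[OF N0] by (simp add: th_def)
    have k1: "th * (1 - 2/nt) + 8 * th\<^sup>2 * c\<^sup>2 / nt\<^sup>2 \<le> \<theta> N s"
    proof -
      have "th * (1 - 2/nt) + 8 * th\<^sup>2 * c\<^sup>2 / nt\<^sup>2 = (nt* sqrt nt/(16*Mx* sqrt N))*(1-2/nt) + 8*(nt* sqrt nt/(16*Mx* sqrt N))\<^sup>2*c\<^sup>2/nt\<^sup>2"
        by (simp add: th_def \<theta>_def nt_def)
      also have "\<dots> \<le> (nt-1)* sqrt(nt-1)/(16*Mx* sqrt N)" by (rule S1[OF nt3 ntN Mx0 Mxc])
      also have "\<dots> = \<theta> N s" by (simp add: \<theta>_def nts)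
      finally show ?thesis .
    qed
    have k2: "th * (4*d/nt\<^sup>2) + th\<^sup>2 * (32*d\<^sup>2/nt^4) \<le> D N t - D N s"
    proof -
      have "D N s = 3/4*(sqrt (nt-1) - sqrt (real Lc))/ sqrt N" by (simp add: D_def nts)
      moreover have "D N t = 3/4*(sqrt nt - sqrt (real Lc))/ sqrt N" by (simp add: D_def nt_def)
      ultimately show ?thesis using S2[OF nt3 ntN Mx0 less_imp_le[OF d0] Mxd, of "real Lc"]
        by (simp add: th_def \<theta>_def nt_def)
    qed
    have k3: "th\<^sup>2 * (8*c\<^sup>2*y/nt\<^sup>2 + 32*d\<^sup>2/nt^4) \<le> 1" if "0 \<le> y" "y \<le> G s" for y
    proof -
      have "y \<le> (c\<^sup>2 + 2*d) + (a * real Lc)/(nt-1)" using that by (simp add: G_def B_def nts)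
      from S3[OF nt3 ntN Mx0 Mxc less_imp_le[OF d0] Mxd _ Mxa _ that(1) this] show ?thesis
        using a_pos N2 by (simp add: th_def \<theta>_def nt_def)
    qed
    define H where "H x = I x * exp (th * (1 - 2/nt) * L s x - D N t)" for x
    define V where "V x = 8*c\<^sup>2*L s x/nt\<^sup>2 + 32*d\<^sup>2/nt^4" for x
    define K where "K = exp (th * G s)"
    have AM: "A \<in> sets M" using A filt_sub[of "t-1"] unfolding subalgebra_def by auto
    have HF: "H \<in> borel_measurable (F s)"
    proof -
      have [measurable]: "L s \<in> borel_measurable (F s)" "I \<in> borel_measurable (F s)" using L_adapted IF by auto
      show ?thesis unfolding H_def by measurable
    qed
    have HM[measurable]: "H \<in> borel_measurable M" using measurable_from_subalg[OF filt_sub HF] .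
    have VM[measurable]: "V \<in> borel_measurable M" unfolding V_def by measurable
    have As: "A \<in> sets (F s)" using A ts by simp
    have fF: "(\<lambda>x. indicator A x * H x) \<in> borel_measurable (F s)"
      using HF As by (intro borel_measurable_times) auto
    have Ut: "U t \<in> borel_measurable M" using UM[OF t1] .
    have ts1: "t - 1 = s" using ts by simp
    have P0: "0 \<le> H x \<and> H x \<le> K \<and> (x \<in> S0 \<longrightarrow> th\<^sup>2 * V x \<le> 1)" if gx: "x \<in> space M"
         "L 0 x \<le> a \<longrightarrow> (\<forall>t. L t x \<le> G t)" for x
    proof (cases "x \<in> S0")
      case True
      then have Ls: "L s x \<le> G s" using gx by (auto simp: S0_def)
      have L0: "L s x \<ge> 0" using Lnn[OF gx(1)] .
      have c1: "0 \<le> 1 - 2/nt" "1 - 2/nt \<le> 1" using nt3 by (auto simp: field_simps)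
      have "th * (1 - 2/nt) * L s x \<le> th * G s"
      proof -
        have "th * (1 - 2/nt) * L s x \<le> th * 1 * L s x"
          using c1 th0' L0 by (intro mult_right_mono mult_left_mono) auto
        also have "\<dots> \<le> th * G s" using Ls th0' by (simp add: mult_left_mono)
        finally show ?thesis .
      qed
      then have "th * (1 - 2/nt) * L s x - D N t \<le> th * G s" using D0[OF N0, of t] by linarith
      then have "H x \<le> K" using True by (simp add: H_def K_def I_def)
      moreover have "th\<^sup>2 * V x \<le> 1" using k3[OF L0 Ls] by (simp add: V_def)
      ultimately show ?thesis by (simp add: H_def I_def)
    next
      case False then show ?thesis by (simp add: H_def I_def K_def)
    qed
    have P1: "indicator A x * Z N t x \<le> indicator A x * H x * (1 + th^2 * V x) + th * (indicator A x * H x * U t x)"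
      if gx: "x \<in> space M" "\<forall>t\<ge>1. L t x \<le> (1 - 2 / nn t) * L (t-1) x + U t x"
         "\<forall>t\<ge>1. \<bar>U t x\<bar> \<le> 2 * c * sqrt (L (t-1) x) / nn t + 4 * d / (nn t)\<^sup>2"
         "L 0 x \<le> a \<longrightarrow> (\<forall>t. L t x \<le> G t)" for x
    proof (cases "x \<in> S0")
      case True
      have p0: "th\<^sup>2 * V x \<le> 1" using P0[OF gx(1) gx(4)] True by simp
      have r: "L t x \<le> (1 - 2/nt) * L s x + U t x" using gx(2) t1 ts1 by (auto simp: nt_def)
      have u: "\<bar>U t x\<bar> \<le> 2 * c * sqrt (L s x) / nt + 4 * d / nt\<^sup>2" using gx(3) t1 ts1 by (auto simp: nt_def)
      have L0: "L s x \<ge> 0" using Lnn[OF gx(1)] .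
      have u2: "(U t x)\<^sup>2 \<le> V x"
      proof -
        have "(U t x)\<^sup>2 = \<bar>U t x\<bar>\<^sup>2" by simp
        also have "\<dots> \<le> (2 * c * sqrt (L s x) / nt + 4 * d / nt\<^sup>2)\<^sup>2"
          using u by (intro power_mono) auto
        also have "\<dots> \<le> 2 * (2 * c * sqrt (L s x) / nt)\<^sup>2 + 2 * (4 * d / nt\<^sup>2)\<^sup>2"
          by (smt (verit) sum_squares_bound power2_sum)
        also have "\<dots> = V x" using L0 nt3 by (simp add: V_def power_divide power_mult_distrib field_simps)
        finally show ?thesis .
      qed
      have "(th * U t x)\<^sup>2 \<le> th\<^sup>2 * V x" using u2 by (simp add: power_mult_distrib mult_left_mono)
      then have "(th * U t x)\<^sup>2 \<le> 1" using p0 by simp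
      then have thU: "th * U t x \<le> 1" using power2_le_imp_le[of "th * U t x" 1] by simp
      have e1: "exp (th * L t x - D N t) \<le> exp (th * (1 - 2/nt) * L s x - D N t + th * U t x)"
      proof -
        have "th * L t x \<le> th * ((1-2/nt)*L s x + U t x)" using r th0' by (rule mult_left_mono)
        then show ?thesis by (simp add: algebra_simps)
      qed
      also have "\<dots> = exp (th * (1 - 2/nt) * L s x - D N t) * exp (th * U t x)" by (simp add: exp_add)
      also have "\<dots> \<le> exp (th * (1 - 2/nt) * L s x - D N t) * (1 + th * U t x + th\<^sup>2 * V x)"
      proof (rule mult_left_mono)
        show "exp (th * U t x) \<le> 1 + th * U t x + th\<^sup>2 * V x"
          using exp_le_quad[OF thU] \<open>(th * U t x)\<^sup>2 \<le> th\<^sup>2 * V x\<close> by linarith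
      qed simp
      finally have "Z N t x \<le> H x * (1 + th * U t x + th\<^sup>2 * V x)"
        using True by (simp add: Z_def H_def I_def th_def)
      then have "indicator A x * Z N t x \<le> indicator A x * (H x * (1 + th * U t x + th\<^sup>2 * V x))"
        by (simp add: mult_left_mono)
      then show ?thesis by (simp add: algebra_simps)
    next
      case False then show ?thesis by (simp add: H_def I_def Z_def)
    qed
    have P2: "indicator A x * H x * (1 + th * (4*d/nt\<^sup>2) + th\<^sup>2 * V x) \<le> indicator A x * Z N s x"
      if gx: "x \<in> space M" for x
    proof (cases "x \<in> S0")
      case True
      have L0: "L s x \<ge> 0" using Lnn[OF gx] .
      have "H x * (1 + th * (4*d/nt\<^sup>2) + th\<^sup>2 * V x) \<le> H x * exp (th * (4*d/nt\<^sup>2) + th\<^sup>2 * V x)"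
      proof (rule mult_left_mono)
        show "1 + th * (4*d/nt\<^sup>2) + th\<^sup>2 * V x \<le> exp (th * (4*d/nt\<^sup>2) + th\<^sup>2 * V x)"
          using exp_ge_add_one_self[of "th * (4*d/nt\<^sup>2) + th\<^sup>2 * V x"] by (simp only: add.assoc)
        show "0 \<le> H x" by (simp add: H_def I_def)
      qed
      also have "\<dots> = exp (th * (1 - 2/nt) * L s x - D N t + th * (4*d/nt\<^sup>2) + th\<^sup>2 * V x)"
        using True by (simp add: H_def I_def exp_add[symmetric])
      also have "\<dots> \<le> exp (\<theta> N s * L s x - D N s)"
      proof -
        have "th * (1 - 2/nt) * L s x - D N t + th * (4*d/nt\<^sup>2) + th\<^sup>2 * V x
            = (th * (1 - 2/nt) + 8 * th\<^sup>2 * c\<^sup>2 / nt\<^sup>2) * L s x + (th * (4*d/nt\<^sup>2) + th\<^sup>2 * (32*d\<^sup>2/nt^4)) - D N t"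
          by (simp add: V_def algebra_simps)
        also have "\<dots> \<le> \<theta> N s * L s x + (D N t - D N s) - D N t"
          using k1 k2 L0 by (intro add_mono diff_right_mono mult_right_mono) auto
        finally show ?thesis by simp
      qed
      finally have "H x * (1 + th * (4*d/nt\<^sup>2) + th\<^sup>2 * V x) \<le> Z N s x"
        using True by (simp add: Z_def I_def)
      then show ?thesis by (simp add: mult.assoc mult_left_mono)
    next
      case False then show ?thesis by (simp add: H_def I_def Z_def)
    qed

    define f where "f x = indicator A x * H x" for x
    have fF': "f \<in> borel_measurable (F s)" using fF by (simp add: f_def[abs_def])
    have fM[measurable]: "f \<in> borel_measurable M" using measurable_from_subalg[OF filt_sub fF'] .
    have f0: "f x \<ge> 0" for x by (simp add: f_def H_def I_def)
    have AMm[measurable]: "A \<in> sets M" using AM .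
    have fbd: "AE x in M. f x \<le> K"
      using good by eventually_elim (use P0 in \<open>auto simp: f_def indicator_def K_def\<close>)
    have Ui: "integrable M (U t)" using U_int[OF t1] .
    have i1: "integrable M (\<lambda>x. f x * (1 + th\<^sup>2 * V x))"
    proof (rule P.integrable_const_bound[where B="2*K"])
      show "AE x in M. norm (f x * (1 + th\<^sup>2 * V x)) \<le> 2 * K"
        using good
      proof eventually_elim
        case (elim x)
        show ?case
        proof (cases "x \<in> S0")
          case True
          have p: "0 \<le> H x" "H x \<le> K" "th\<^sup>2 * V x \<le> 1" using P0[of x] elim True by auto
          have v0: "0 \<le> th\<^sup>2 * V x" using Lnn[of x s] elim by (simp add: V_def)
          have "f x \<le> K" using p by (simp add: f_def indicator_def)
          then have "f x * (1 + th\<^sup>2 * V x) \<le> K * 2" using f0[of x] p v0 by (intro mult_mono) auto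
          then show ?thesis using f0[of x] v0 by simp
        next
          case False then show ?thesis by (simp add: f_def H_def I_def K_def)
        qed
      qed
    qed simp
    have i2: "integrable M (\<lambda>x. f x * U t x)"
    proof (rule Bochner_Integration.integrable_bound[where f="\<lambda>x. K * U t x"])
      show "integrable M (\<lambda>x. K * U t x)" using Ui by simp
      show "AE x in M. norm (f x * U t x) \<le> norm (K * U t x)"
        using fbd
      proof eventually_elim
        case (elim x)
        have "K \<ge> 0" by (simp add: K_def)
        then show ?case using elim f0[of x] by (simp add: abs_mult mult_right_mono)
      qed
    qed (use Ut in simp)
    have i3: "integrable M (\<lambda>x. f x * (4*d/nt\<^sup>2))"
    proof (rule P.integrable_const_bound[where B="K * (4*d/nt\<^sup>2)"])
      have q0: "4*d/nt\<^sup>2 \<ge> 0" using d0 by simp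
      show "AE x in M. norm (f x * (4*d/nt\<^sup>2)) \<le> K * (4*d/nt\<^sup>2)"
        using fbd
      proof eventually_elim
        case (elim x)
        have "f x * (4*d/nt\<^sup>2) \<le> K * (4*d/nt\<^sup>2)" using elim q0 by (rule mult_right_mono)
        moreover have "0 \<le> f x * (4*d/nt\<^sup>2)" by (rule mult_nonneg_nonneg[OF f0 q0])
        then have "norm (f x * (4*d/nt\<^sup>2)) = f x * (4*d/nt\<^sup>2)" by (simp only: real_norm_def abs_of_nonneg)
        ultimately show ?case by linarith
      qed
    qed simp
    have iZt: "integrable M (\<lambda>x. indicator A x * Z N t x)"
      using integrable_real_mult_indicator[OF AM Zi[OF N0, of t]] by (simp add: mult.commute)
    have iZs: "integrable M (\<lambda>x. indicator A x * Z N s x)"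
      using integrable_real_mult_indicator[OF AM Zi[OF N0, of s]] by (simp add: mult.commute)
    have ice: "integrable M (\<lambda>x. f x * real_cond_exp M (F s) (U t) x)"
      and ceq: "(\<integral>x. f x * real_cond_exp M (F s) (U t) x \<partial>M) = (\<integral>x. f x * U t x \<partial>M)"
      using sigma_finite_subalgebra.real_cond_exp_intg[OF sfs[of s] i2 fF' Ut] by auto
    have ce': "AE x in M. \<bar>real_cond_exp M (F s) (U t) x\<bar> \<le> 4 * d / nt\<^sup>2"
      using ce[OF t1] ts1 by (simp add: nt_def)
    have "(\<integral>x. indicator A x * Z N t x \<partial>M) \<le> (\<integral>x. f x * (1 + th\<^sup>2 * V x) + th * (f x * U t x) \<partial>M)"
    proof (rule integral_mono_AE[OF iZt])
      show "integrable M (\<lambda>x. f x * (1 + th\<^sup>2 * V x) + th * (f x * U t x))" using i1 i2 by simp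
      show "AE x in M. indicator A x * Z N t x \<le> f x * (1 + th\<^sup>2 * V x) + th * (f x * U t x)"
        using good by eventually_elim (use P1 in \<open>auto simp: f_def\<close>)
    qed
    also have "\<dots> = (\<integral>x. f x * (1 + th\<^sup>2 * V x) \<partial>M) + (\<integral>x. th * (f x * U t x) \<partial>M)"
      by (rule Bochner_Integration.integral_add) (use i1 i2 in auto)
    also have "(\<integral>x. th * (f x * U t x) \<partial>M) = th * (\<integral>x. f x * U t x \<partial>M)"
      by (rule integral_mult_right_zero)
    also have "(\<integral>x. f x * U t x \<partial>M) \<le> (\<integral>x. f x * (4*d/nt\<^sup>2) \<partial>M)"
      unfolding ceq[symmetric]
    proof (rule integral_mono_AE[OF ice i3])
      show "AE x in M. f x * real_cond_exp M (F s) (U t) x \<le> f x * (4 * d / nt\<^sup>2)"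
        using ce'
      proof eventually_elim
        case (elim x)
        have "real_cond_exp M (F s) (U t) x \<le> 4 * d / nt\<^sup>2" using elim by linarith
        then show ?case by (rule mult_left_mono) (rule f0)
      qed
    qed
    then have "(\<integral>x. f x * (1 + th\<^sup>2 * V x) \<partial>M) + th * (\<integral>x. f x * U t x \<partial>M)
        \<le> (\<integral>x. f x * (1 + th\<^sup>2 * V x) \<partial>M) + th * (\<integral>x. f x * (4*d/nt\<^sup>2) \<partial>M)"
      by (rule add_left_mono[OF mult_left_mono[OF _ th0']])
    also have "\<dots> = (\<integral>x. f x * (1 + th * (4*d/nt\<^sup>2) + th\<^sup>2 * V x) \<partial>M)"
    proof -
      have "(\<integral>x. f x * (1 + th * (4*d/nt\<^sup>2) + th\<^sup>2 * V x) \<partial>M) = (\<integral>x. f x * (1 + th\<^sup>2 * V x) + th * (f x * (4*d/nt\<^sup>2)) \<partial>M)"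
        by (rule Bochner_Integration.integral_cong) (auto simp: algebra_simps)
      also have "\<dots> = (\<integral>x. f x * (1 + th\<^sup>2 * V x) \<partial>M) + (\<integral>x. th * (f x * (4*d/nt\<^sup>2)) \<partial>M)"
        by (rule Bochner_Integration.integral_add[OF i1 integrable_mult_right[OF i3]])
      also have "(\<integral>x. th * (f x * (4*d/nt\<^sup>2)) \<partial>M) = th * (\<integral>x. f x * (4*d/nt\<^sup>2) \<partial>M)"
        by (rule integral_mult_right_zero)
      finally show ?thesis by simp
    qed
    also have "\<dots> \<le> (\<integral>x. indicator A x * Z N s x \<partial>M)"
    proof (rule integral_mono_AE[OF _ iZs])
      show "integrable M (\<lambda>x. f x * (1 + th * (4*d/nt\<^sup>2) + th\<^sup>2 * V x))"
      proof -
        have "integrable M (\<lambda>x. f x * (1 + th\<^sup>2 * V x) + th * (f x * (4*d/nt\<^sup>2)))"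
          by (rule Bochner_Integration.integrable_add[OF i1 integrable_mult_right[OF i3]])
        moreover have "(\<lambda>x. f x * (1 + th * (4*d/nt\<^sup>2) + th\<^sup>2 * V x)) = (\<lambda>x. f x * (1 + th\<^sup>2 * V x) + th * (f x * (4*d/nt\<^sup>2)))"
          by (rule ext) (simp add: algebra_simps)
        ultimately show ?thesis by simp
      qed
      show "AE x in M. f x * (1 + th * (4*d/nt\<^sup>2) + th\<^sup>2 * V x) \<le> indicator A x * Z N s x"
        using AE_space by eventually_elim (use P2 in \<open>auto simp: f_def\<close>)
    qed
    finally show ?thesis using ts1 by simp
  qed
  have epoch: "measure M {x\<in>space M. \<exists>t\<le>T N. exp (l/16) / (\<delta> * w) \<le> Z N t x} \<le> \<delta> * w"
    if N1: "N \<ge> real Lc" and N2: "N \<ge> l" and w: "w > 0" for N w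
  proof -
    have N0: "N \<ge> 0" using N1 by simp
    have cpos: "exp (l/16) / (\<delta> * w) > 0" using \<delta> w by simp
    have "measure M {x\<in>space M. \<exists>t\<le>T N. exp (l/16) / (\<delta> * w) \<le> Z N t x} \<le> (\<integral>x. Z N 0 x \<partial>M) / (exp (l/16) / (\<delta> * w))"
    proof (rule maximal_ineq[OF prob filt_sub filt_mono ZF Zi[OF N0] _ _ cpos])
      show "\<And>t x. x \<in> space M \<Longrightarrow> 0 \<le> Z N t x" using Zn by simp
      fix t A assume "1 \<le> t" "t \<le> T N" "A \<in> sets (F (t - 1))"
      moreover have "nn t \<le> N"
      proof -
        have "t + Lc \<le> nat \<lfloor>N\<rfloor>" using \<open>1 \<le> t\<close> \<open>t \<le> T N\<close> unfolding T_def by linarith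
        then have "real (t + Lc) \<le> real (nat \<lfloor>N\<rfloor>)" by (simp only: of_nat_le_iff)
        also have "\<dots> \<le> N" using N0 by linarith
        finally show ?thesis by (simp add: nn_def)
      qed
      ultimately show "(\<integral>x. indicator A x * Z N t x \<partial>M) \<le> (\<integral>x. indicator A x * Z N (t-1) x \<partial>M)"
        using step[OF N1 N2] by blast
    qed
    also have "\<dots> \<le> exp (l/16) / (exp (l/16) / (\<delta> * w))"
    proof (intro divide_right_mono)
      have "(\<integral>x. Z N 0 x \<partial>M) \<le> (\<integral>x. exp (l/16) \<partial>M)"
      proof (rule integral_mono[OF Zi[OF N0]])
        show "integrable M (\<lambda>x. exp (l/16))" by simp
        fix x assume x: "x \<in> space M"
        show "Z N 0 x \<le> exp (l/16)"
        proof (cases "x \<in> S0")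
          case True
          then have La: "L 0 x \<le> a" by (simp add: S0_def)
          have "\<theta> N 0 * L 0 x \<le> \<theta> N 0 * a" using La th0[OF N0, of 0] by (simp add: mult_left_mono)
          also have "\<theta> N 0 * a = (a * real Lc) * sqrt (real Lc) / (16 * Mx * sqrt N)"
            by (simp add: \<theta>_def nn_def)
          also have "\<dots> \<le> (Mx * l) * sqrt N / (16 * Mx * sqrt N)"
          proof (rule divide_right_mono)
            show "(a * real Lc) * sqrt (real Lc) \<le> (Mx * l) * sqrt N"
              by (rule mult_mono) (use Mxa N1 l0 Mx0 in auto)
          qed (use Mx0 N1 in auto)
          also have "\<dots> = l/16" using Mx0 N1 Lc by (simp add: field_simps)
          finally have "\<theta> N 0 * L 0 x - D N 0 \<le> l/16" by (simp add: D_def nn_def)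
          then show ?thesis using True by (simp add: Z_def I_def)
        next
          case False then show ?thesis by (simp add: Z_def I_def)
        qed
      qed
      then show "(\<integral>x. Z N 0 x \<partial>M) \<le> exp (l/16)" by (simp add: P.prob_space)
    qed (use cpos in auto)
    also have "\<dots> = \<delta> * w" using \<delta> w by simp
    finally show ?thesis .
  qed

  define N0 where "N0 = max (real Lc) l"
  define Nj where "Nj j = N0 * 2^(j+1)" for j :: nat
  define wj where "wj j = 1 / ((real j + 1) * (real j + 2))" for j :: nat
  define E where "E j = {x\<in>space M. \<exists>t\<le>T (Nj j). exp (l/16) / (\<delta> * wj j) \<le> Z (Nj j) t x}" for j
  have N0ge: "N0 \<ge> real Lc" "N0 \<ge> l" by (auto simp: N0_def)
  have N0pos: "N0 > 0" using l0 N0ge by linarith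
  have Njge: "Nj j \<ge> N0" for j
  proof -
    have "(1::real) \<le> 2^(j+1)" by (rule one_le_power) simp
    then have "N0 * 1 \<le> N0 * 2^(j+1)" using N0pos by (intro mult_left_mono) auto
    then show ?thesis by (simp add: Nj_def)
  qed
  have wj0: "wj j > 0" for j by (simp add: wj_def)
  have EM[measurable]: "E j \<in> sets M" for j unfolding E_def by measurable
  have Eb: "measure M (E j) \<le> \<delta> * wj j" for j
    unfolding E_def by (rule epoch) (use Njge[of j] N0ge wj0 in auto)
  have wsum: "wj sums 1"
  proof -
    have "(\<lambda>n. inverse (real (Suc n)) - inverse (real (Suc (Suc n)))) sums (inverse (real (Suc 0)) - 0)"
      by (rule telescope_sums'[OF LIMSEQ_inverse_real_of_nat])
    moreover have "(\<lambda>n. inverse (real (Suc n)) - inverse (real (Suc (Suc n)))) = wj"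
      by (rule ext) (simp add: wj_def field_simps)
    ultimately show ?thesis by simp
  qed
  have dsum: "(\<lambda>j. \<delta> * wj j) sums \<delta>" using sums_mult[OF wsum, of \<delta>] by simp
  have sumE: "summable (\<lambda>j. measure M (E j))"
    by (rule summable_comparison_test'[OF sums_summable[OF dsum], of 0]) (use Eb in auto)
  have UE: "measure M (\<Union>j. E j) \<le> \<delta>"
  proof -
    have "measure M (\<Union>j. E j) \<le> (\<Sum>j. measure M (E j))"
      by (rule P.finite_measure_subadditive_countably) (use sumE in auto)
    also have "\<dots> \<le> (\<Sum>j. \<delta> * wj j)" by (rule suminf_le[OF Eb sumE sums_summable[OF dsum]])
    also have "\<dots> = \<delta>" using dsum by (simp add: sums_iff)
    finally show ?thesis .
  qed
  obtain Nul where Nul: "\<And>x. x \<in> space M - Nul \<Longrightarrow> x \<in> space M \<and> (\<forall>t\<ge>1. L t x \<le> (1 - 2 / nn t) * L (t-1) x + U t x)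
     \<and> (\<forall>t\<ge>1. \<bar>U t x\<bar> \<le> 2 * c * sqrt (L (t-1) x) / nn t + 4 * d / (nn t)\<^sup>2)
     \<and> (L 0 x \<le> a \<longrightarrow> (\<forall>t. L t x \<le> G t))" and NulN: "Nul \<in> null_sets M"
    using AE_E3[OF good] by blast
  define Kc where "Kc = max (real Lc - 2) 32 * ((if Lc \<ge> 32 then 1 else 0) + 32 * (if Lc \<le> 31 then 1 else 0))"
  have Kc32: "Kc \<ge> 32" by (auto simp: Kc_def)
  define R where "R t = 31.5 * (max (real Lc - 2) 32 * ((if Lc \<ge> 32 then 1 else 0) + 32 * (if Lc \<le> 31 then 1 else 0)))
              * max (max (a * real Lc / ln (1 / \<delta>)) (C\<^sub>2 / C\<^sub>1\<^sup>2)) (C\<^sub>3\<^sup>2 / C\<^sub>1\<^sup>2)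
              * (ln (1 / \<delta>) + 2 * ln (ln (real t + 9))) / (real t + real Lc)" for t :: nat
  have R_eq: "R t = 31.5 * Kc * Mx * (l + 2 * ln (ln (real t + 9))) / nn t" for t
    by (simp add: R_def Kc_def Mx_def l_def nn_def)
  have lnln0: "ln (ln (real t + 9)) \<ge> ln 2" for t :: nat using lnln_ge[of "real t"] by simp
  have ln20: "ln (2::real) > 0" by simp
  have Rlow: "1008 * Mx * (l + 2 * ln (ln (real t + 9))) / nn t \<le> R t" for t
  proof -
    have p: "Mx * (l + 2 * ln (ln (real t + 9))) \<ge> 0" using Mx0 l0 lnln0[of t] ln20 by simp
    have "1008 * Mx * (l + 2 * ln (ln (real t + 9))) \<le> (31.5 * Kc) * (Mx * (l + 2 * ln (ln (real t + 9))))"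
      using mult_right_mono[OF _ p, of 1008 "31.5 * Kc"] Kc32 by (simp add: mult.assoc)
    then have "1008 * Mx * (l + 2 * ln (ln (real t + 9))) \<le> 31.5 * Kc * Mx * (l + 2 * ln (ln (real t + 9)))"
      by (simp add: mult.assoc)
    then have "1008 * Mx * (l + 2 * ln (ln (real t + 9))) / nn t \<le> 31.5 * Kc * Mx * (l + 2 * ln (ln (real t + 9))) / nn t"
      using nn3[of t] by (intro divide_right_mono) auto
    then show ?thesis unfolding R_eq .
  qed
  have pw: "L t x \<le> R t" if x: "x \<in> S0" "x \<notin> Nul" "\<forall>j. x \<notin> E j" for x t
  proof -
    have xs: "x \<in> space M" and La: "L 0 x \<le> a" using x by (auto simp: S0_def)
    have gx: "L 0 x \<le> a \<longrightarrow> (\<forall>t. L t x \<le> G t)" using Nul[of x] xs x by auto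
    have lnlnt: "ln (ln (real t + 9)) \<ge> 0" using lnln0[of t] ln20 by linarith
    show ?thesis
    proof (cases "t = 0")
      case True
      have "a * real Lc \<le> Mx * (l + 2 * ln (ln (real t + 9)))"
        using Mxa Mx0 lnlnt by (smt (verit) mult_left_mono)
      then have "a \<le> Mx * (l + 2 * ln (ln (real t + 9))) / nn t" using True Lc by (simp add: nn_def field_simps)
      also have "\<dots> \<le> 1008 * Mx * (l + 2 * ln (ln (real t + 9))) / nn t"
        using Mx0 lnlnt l0 nn3[of t] by (simp add: divide_right_mono)
      finally show ?thesis using Rlow[of t] La True by simp
    next
      case False
      then have t1: "t \<ge> 1" by simp
      show ?thesis
      proof (cases "nn t \<le> l")
        case True
        have "L t x \<le> G t" using gx La by simp
        also have "G t = c\<^sup>2 + 2*d + a * real Lc / nn t" by (simp add: G_def B_def)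
        also have "\<dots> \<le> 3 * Mx + Mx * l / nn t" using Mxc Mxd Mxa nn3[of t] by (smt (verit) divide_right_mono)
        also have "\<dots> \<le> 3 * Mx * (l / nn t) + Mx * l / nn t"
        proof -
          have "1 \<le> l / nn t" using True nn3[of t] by simp
          then have "3 * Mx * 1 \<le> 3 * Mx * (l / nn t)" using Mx0 by (intro mult_left_mono) auto
          then show ?thesis by simp
        qed
        also have "\<dots> = 4 * Mx * l / nn t" by simp
        also have "\<dots> \<le> 1008 * Mx * (l + 2 * ln (ln (real t + 9))) / nn t"
          using Mx0 lnlnt l0 nn3[of t] by (intro divide_right_mono) (simp_all add: mult_mono)
        also have "\<dots> \<le> R t" by (rule Rlow)
        finally show ?thesis .
      next
        case False
        have ntL: "nn t > real Lc" using t1 by (simp add: nn_def)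
        have gt: "nn t / N0 > 1" using False ntL N0pos by (simp add: N0_def field_simps)
        obtain j where j: "2^j < nn t / N0" "nn t / N0 \<le> 2^(j+1)" using two_pow_bracket[OF gt] by blast
        have j1: "N0 * 2^j < nn t" using j(1) N0pos by (simp add: field_simps)
        have j2: "nn t \<le> Nj j" using j(2) N0pos by (simp add: Nj_def field_simps)
        have tT: "t \<le> T (Nj j)"
        proof -
          have "t + Lc \<le> nat \<lfloor>Nj j\<rfloor>" by (rule le_nat_floor) (use j2 in \<open>simp add: nn_def\<close>)
          then show ?thesis by (simp add: T_def)
        qed
        have "x \<notin> E j" using x by simp
        then have zlt: "Z (Nj j) t x < exp (l/16) / (\<delta> * wj j)" using xs tT by (auto simp: E_def)
        have xS0: "x \<in> S0" using x by simp
        have ww: "exp (l/16) / (\<delta> * wj j) = exp (l/16 + l + ln ((real j + 1) * (real j + 2)))"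
        proof -
          have e1: "exp l = 1/\<delta>" using \<delta> by (simp add: l_def)
          have e2: "exp (ln ((real j + 1) * (real j + 2))) = (real j + 1) * (real j + 2)" by simp
          have "exp (l/16 + l + ln ((real j + 1) * (real j + 2))) = exp (l/16) * (1/\<delta>) * ((real j + 1) * (real j + 2))"
            by (simp only: exp_add e1 e2)
          also have "\<dots> = exp (l/16) / (\<delta> * wj j)" using \<delta> by (simp add: wj_def)
          finally show ?thesis by simp
        qed
        have lt: "\<theta> (Nj j) t * L t x - D (Nj j) t < l/16 + l + ln ((real j + 1) * (real j + 2))"
          using zlt xS0 unfolding ww by (simp add: Z_def I_def)
        have Njpos: "Nj j > 0" using Njge[of j] N0pos by linarith
        have Dle: "D (Nj j) t \<le> 3/4"
        proof -
          have s1: "sqrt (nn t) \<le> sqrt (Nj j)" using j2 by simp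
          have s3: "sqrt (nn t) - sqrt (real Lc) \<le> sqrt (Nj j)" using s1 real_sqrt_ge_zero[of "real Lc"] by linarith
          have "(sqrt (nn t) - sqrt (real Lc)) / sqrt (Nj j) \<le> 1" using s3 Njpos by (auto simp: divide_le_eq)
          then have "3/4 * ((sqrt (nn t) - sqrt (real Lc)) / sqrt (Nj j)) \<le> 3/4 * 1" by (rule mult_left_mono) simp
          then show ?thesis unfolding D_def by (simp only: times_divide_eq_right mult_1_right)
        qed
        have thlow: "nn t / (32 * Mx) \<le> \<theta> (Nj j) t"
        proof -
          have "Nj j = 2 * (N0 * 2^j)" by (simp add: Nj_def)
          then have "Nj j \<le> 4 * nn t" using j1 nn3[of t] by linarith
          then have "sqrt (Nj j) \<le> sqrt (4 * nn t)" by simp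
          also have "\<dots> = 2 * sqrt (nn t)" by (simp add: real_sqrt_mult)
          finally have "sqrt (Nj j) \<le> 2 * sqrt (nn t)" .
          then have "1/2 \<le> sqrt (nn t) / sqrt (Nj j)" using Njpos by (simp add: field_simps)
          then have "nn t * (1/2) \<le> nn t * (sqrt (nn t) / sqrt (Nj j))" using nn3[of t] by (intro mult_left_mono) auto
          then have "nn t * (1/2) / (16 * Mx) \<le> nn t * (sqrt (nn t) / sqrt (Nj j)) / (16 * Mx)"
            using Mx0 by (intro divide_right_mono) auto
          then show ?thesis by (simp add: \<theta>_def field_simps)
        qed
        have L0: "L t x \<ge> 0" using Lnn[OF xs] .
        have "nn t / (32 * Mx) * L t x \<le> \<theta> (Nj j) t * L t x" using thlow L0 by (rule mult_right_mono)
        also have "\<dots> < l/16 + l + ln ((real j + 1) * (real j + 2)) + 3/4" using lt Dle by linarith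
        finally have "nn t / (32 * Mx) * L t x < l/16 + l + ln ((real j + 1) * (real j + 2)) + 3/4" .
        then have Lb: "L t x < Mx * (34 * l + 32 * ln ((real j + 1) * (real j + 2)) + 24) / nn t"
          using Mx0 nn3[of t] by (simp add: field_simps)
        have t9: "real t + 9 \<ge> 2^(j+1)"
        proof -
          have "(1::real) \<le> 2^j" by (rule one_le_power) simp
          then have "(real Lc - 2) * 1 \<le> (real Lc - 2) * 2^j" using Lc by (intro mult_left_mono) auto
          then have f1: "real Lc - 2 \<le> real Lc * 2^j - 2 * 2^j" by (simp add: algebra_simps)
          have f2: "real Lc * 2^j \<le> N0 * 2^j" using N0ge by (intro mult_right_mono) auto
          have f3: "N0 * 2^j < real t + real Lc" using j1 by (simp add: nn_def)
          have "(2::real)^(j+1) = 2 * 2^j" by simp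
          then show ?thesis using f1 f2 f3 by linarith
        qed
        have "34 * l + 32 * ln ((real j + 1) * (real j + 2)) + 24 \<le> 1008 * l + 2016 * ln (ln (real t + 9))"
          by (rule epoch_num) (use l0 t9 in auto)
        then have "Mx * (34 * l + 32 * ln ((real j + 1) * (real j + 2)) + 24) / nn t
            \<le> Mx * (1008 * l + 2016 * ln (ln (real t + 9))) / nn t"
          using Mx0 nn3[of t] by (intro divide_right_mono mult_left_mono) auto
        also have "\<dots> = 1008 * Mx * (l + 2 * ln (ln (real t + 9))) / nn t" by (simp add: algebra_simps)
        also have "\<dots> \<le> R t" by (rule Rlow)
        finally show ?thesis using Lb by simp
      qed
    qed
  qed
  have incl: "S0 \<subseteq> {x\<in>space M. \<forall>t. L t x \<le> R t} \<union> (Nul \<union> (\<Union>j. E j))"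
    using pw by (auto simp: S0_def)
  have SM: "{x\<in>space M. \<forall>t. L t x \<le> R t} \<in> sets M" by measurable
  have NulM: "Nul \<in> sets M" and Nul0: "measure M Nul = 0" using NulN by (auto simp: null_sets_def measure_def)
  have "1 - \<delta> \<le> measure M S0" using init by (simp add: S0_def)
  also have "\<dots> \<le> measure M ({x\<in>space M. \<forall>t. L t x \<le> R t} \<union> (Nul \<union> (\<Union>j. E j)))"
    by (rule P.finite_measure_mono[OF incl]) (use SM NulM in auto)
  also have "\<dots> \<le> measure M {x\<in>space M. \<forall>t. L t x \<le> R t} + measure M (Nul \<union> (\<Union>j. E j))"
    by (rule measure_Un_le) (use SM NulM in auto)
  also have "measure M (Nul \<union> (\<Union>j. E j)) \<le> measure M Nul + measure M (\<Union>j. E j)"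
    by (rule measure_Un_le) (use NulM in auto)
  finally have "1 - 2 * \<delta> \<le> measure M {x\<in>space M. \<forall>t. L t x \<le> R t}" using Nul0 UE by linarith
  then show ?thesis unfolding R_def .
qed

end
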